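(* Let $(\Lambda,d)$ be a $k$-graph. Let $\lambda\in\Lambda$ and $(x;(m,n))\in P_\Lambda$ with $m\le d(x)$ and $s(\lambda)=x(m)$, and let $z=\lambda\,\sigma^m x$. Then (i) $z\in\Lambda^{\le\infty}$, and (ii) $(z;(d(\lambda),n-m+d(\lambda)))\sim(x;(m,n))$.
   Context: A $k$-graph $(\Lambda,d)$ is a countable category with a degree functor $d:\Lambda\to\mathbb{N}^k$ satisfying unique factorization (if $d(\lambda)=m+n$ there are unique $\mu,\nu$ with $\lambda=\mu\nu$, $d(\mu)=m$, $d(\nu)=n$); $\Lambda^0$ vertices, $r,s$ range/source, $v\Lambda^n=\{\lambda:r(\lambda)=v,d(\lambda)=n\}$; $e_i$ standard basis, $\le$ coordinatewise, $\vee,\wedge$ coordinatewise max/min. For $m\in(\mathbb{N}\cup\{\infty\})^k$, $\Omega_{k,m}$ is the $k$-graph with objects $\{p\in\mathbb{N}^k:p\le m\}$, morphisms $(p,q)$, $p\le q\le m$, $r(p,q)=p$, $s(p,q)=q$, $d(p,q)=q-p$. A graph morphism $x:\Omega_{k,m}\to\Lambda$ is a degree-preserving functor; $d(x)=m$, $x(a,b)=x((a,b))$, $x(a)=x(a,a)$. It is a boundary path if there is $n_x\in\mathbb{N}^k$, $n_x\le d(x)$, with $x(p)\Lambda^{e_i}=\emptyset$ whenever $p\in\mathbb{N}^k$, $n_x\le p\le d(x)$, $p_i=d(x)_i$; $\Lambda^{\le\infty}$ is the set of boundary paths. $\sigma^px(a,b)=x(a+p,b+p)$ on $\Omega_{k,d(x)-p}$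 for $p\le d(x)$. For $\lambda$ with $s(\lambda)=x(0)$, $\lambda x:\Omega_{k,d(\lambda)+d(x)}\to\Lambda$ is the graph morphism with $(\lambda x)(0,d(\lambda))=\lambda$, $(\lambda x)(0,p)=\lambda\,x(0,p-d(\lambda))$ for $d(\lambda)\le p\le d(\lambda)+d(x)$. $P_\Lambda=\{(x;(m,n)):x\in\Lambda^{\le\infty},m,n\in\mathbb{N}^k,m\le n,n\not\le d(x)\}$, and $(x;(m,n))\sim(y;(p,q))$ iff $x(m\wedge d(x),n\wedge d(x))=y(p\wedge d(y),q\wedge d(y))$, $m-m\wedge d(x)=p-p\wedge d(y)$ and $n-m=q-p$. *)

theory Defs
  imports Main "HOL-Library.Extended_Nat" "HOL-Library.Countable_Set" "HOL-Library.Function_Algebras"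
begin

text \<open>Elements of N^k are represented as functions nat => nat vanishing at indices >= k;
elements of (N u {inf})^k as functions nat => enat vanishing at indices >= k.
A k-graph is a countable category whose morphisms form the set L, whose objects are
identified with the identity morphisms, with range/source maps r, s (returning identity
morphisms), partial composition cmp (cmp f g defined when s f = r g) and degree d.\<close>

definition NN :: "nat \<Rightarrow> (nat \<Rightarrow> nat) set" where
  "NN k = {m. \<forall>i\<ge>k. m i = 0}"

definition NNinf :: "nat \<Rightarrow> (nat \<Rightarrow> enat) set" where
  "NNinf k = {m. \<forall>i\<ge>k. m i = 0}"

definition le_en :: "(nat \<Rightarrow> nat) \<Rightarrow> (nat \<Rightarrow> enat) \<Rightarrow> bool" where
  "le_en p m \<longleftrightarrow> (\<forall>i. enat (p i) \<le> m i)"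

definition unitv :: "nat \<Rightarrow> nat \<Rightarrow> nat" where
  "unitv i = (\<lambda>j. if j = i then 1 else 0)"

definition meet_en :: "(nat \<Rightarrow> nat) \<Rightarrow> (nat \<Rightarrow> enat) \<Rightarrow> nat \<Rightarrow> nat" where
  "meet_en p m = (\<lambda>i. case m i of enat b \<Rightarrow> min (p i) b | \<infinity> \<Rightarrow> p i)"

definition kgraph ::
  "nat \<Rightarrow> 'a set \<Rightarrow> ('a \<Rightarrow> 'a) \<Rightarrow> ('a \<Rightarrow> 'a) \<Rightarrow> ('a \<Rightarrow> 'a \<Rightarrow> 'a) \<Rightarrow> ('a \<Rightarrow> nat \<Rightarrow> nat) \<Rightarrow> bool"
  where
  "kgraph k L r s cmp d \<longleftrightarrow>
     countable L \<and>
     (\<forall>f\<in>L. r f \<in> L \<and> s f \<in> L \<and> r (r f) = r f \<and> s (r f) = r f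
              \<and> r (s f) = s f \<and> s (s f) = s f) \<and>
     (\<forall>f\<in>L. cmp (r f) f = f \<and> cmp f (s f) = f) \<and>
     (\<forall>f\<in>L. \<forall>g\<in>L. s f = r g \<longrightarrow>
         cmp f g \<in> L \<and> r (cmp f g) = r f \<and> s (cmp f g) = s g) \<and>
     (\<forall>f\<in>L. \<forall>g\<in>L. \<forall>h\<in>L. s f = r g \<longrightarrow> s g = r h \<longrightarrow>
         cmp (cmp f g) h = cmp f (cmp g h)) \<and>
     (\<forall>f\<in>L. d f \<in> NN k) \<and>
     (\<forall>f\<in>L. \<forall>g\<in>L. s f = r g \<longrightarrow> d (cmp f g) = d f + d g) \<and>
     (\<forall>f\<in>L. \<forall>m\<in>NN k. \<forall>n\<in>NN k. d f = m + n \<longrightarrow>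
         (\<exists>!(g, h). g \<in> L \<and> h \<in> L \<and> s g = r h \<and> f = cmp g h \<and> d g = m \<and> d h = n))"

text \<open>A degree-preserving functor x : Omega_{k,m} \<rightarrow> Lambda; x p q stands for x((p,q)),
 only its values for p \<le> q \<le> m are relevant.\<close>
definition graph_morph ::
  "nat \<Rightarrow> 'a set \<Rightarrow> ('a \<Rightarrow> 'a) \<Rightarrow> ('a \<Rightarrow> 'a) \<Rightarrow> ('a \<Rightarrow> 'a \<Rightarrow> 'a) \<Rightarrow> ('a \<Rightarrow> nat \<Rightarrow> nat)
    \<Rightarrow> (nat \<Rightarrow> enat) \<Rightarrow> ((nat \<Rightarrow> nat) \<Rightarrow> (nat \<Rightarrow> nat) \<Rightarrow> 'a) \<Rightarrow> bool"
  where
  "graph_morph k L r s cmp d m x \<longleftrightarrow>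
     m \<in> NNinf k \<and>
     (\<forall>p\<in>NN k. \<forall>q\<in>NN k. p \<le> q \<and> le_en q m \<longrightarrow>
        x p q \<in> L \<and> d (x p q) = q - p \<and> r (x p q) = x p p \<and> s (x p q) = x q q) \<and>
     (\<forall>p\<in>NN k. \<forall>q\<in>NN k. \<forall>t\<in>NN k. p \<le> q \<and> q \<le> t \<and> le_en t m \<longrightarrow>
        cmp (x p q) (x q t) = x p t)"

definition boundary_path ::
  "nat \<Rightarrow> 'a set \<Rightarrow> ('a \<Rightarrow> 'a) \<Rightarrow> ('a \<Rightarrow> 'a) \<Rightarrow> ('a \<Rightarrow> 'a \<Rightarrow> 'a) \<Rightarrow> ('a \<Rightarrow> nat \<Rightarrow> nat)
    \<Rightarrow> (nat \<Rightarrow> enat) \<Rightarrow> ((nat \<Rightarrow> nat) \<Rightarrow> (nat \<Rightarrow> nat) \<Rightarrow> 'a) \<Rightarrow> bool"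
  where
  "boundary_path k L r s cmp d m x \<longleftrightarrow>
     graph_morph k L r s cmp d m x \<and>
     (\<exists>nx\<in>NN k. le_en nx m \<and>
        (\<forall>p\<in>NN k. nx \<le> p \<and> le_en p m \<longrightarrow>
           (\<forall>i<k. enat (p i) = m i \<longrightarrow>
              \<not> (\<exists>e\<in>L. r e = x p p \<and> d e = unitv i))))"

definition shift :: "(nat \<Rightarrow> nat) \<Rightarrow> ((nat \<Rightarrow> nat) \<Rightarrow> (nat \<Rightarrow> nat) \<Rightarrow> 'a)
    \<Rightarrow> ((nat \<Rightarrow> nat) \<Rightarrow> (nat \<Rightarrow> nat) \<Rightarrow> 'a)" where
  "shift p x = (\<lambda>a b. x (a + p) (b + p))"

definition deg_shift :: "(nat \<Rightarrow> nat) \<Rightarrow> (nat \<Rightarrow> enat) \<Rightarrow> nat \<Rightarrow> enat" where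
  "deg_shift p m = (\<lambda>i. m i - enat (p i))"

definition deg_concat :: "(nat \<Rightarrow> nat) \<Rightarrow> (nat \<Rightarrow> enat) \<Rightarrow> nat \<Rightarrow> enat" where
  "deg_concat a m = (\<lambda>i. enat (a i) + m i)"

text \<open>z is the graph morphism lambda y : Omega_{k, d(lambda)+d(y)} \<rightarrow> Lambda.\<close>
definition is_concat ::
  "nat \<Rightarrow> 'a set \<Rightarrow> ('a \<Rightarrow> 'a) \<Rightarrow> ('a \<Rightarrow> 'a) \<Rightarrow> ('a \<Rightarrow> 'a \<Rightarrow> 'a) \<Rightarrow> ('a \<Rightarrow> nat \<Rightarrow> nat)
    \<Rightarrow> 'a \<Rightarrow> (nat \<Rightarrow> enat) \<Rightarrow> ((nat \<Rightarrow> nat) \<Rightarrow> (nat \<Rightarrow> nat) \<Rightarrow> 'a)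
    \<Rightarrow> ((nat \<Rightarrow> nat) \<Rightarrow> (nat \<Rightarrow> nat) \<Rightarrow> 'a) \<Rightarrow> bool"
  where
  "is_concat k L r s cmp d lam my y z \<longleftrightarrow>
     graph_morph k L r s cmp d (deg_concat (d lam) my) z \<and>
     z 0 (d lam) = lam \<and>
     (\<forall>p\<in>NN k. d lam \<le> p \<and> le_en p (deg_concat (d lam) my) \<longrightarrow>
        z 0 p = cmp lam (y 0 (p - d lam)))"

definition in_P ::
  "nat \<Rightarrow> 'a set \<Rightarrow> ('a \<Rightarrow> 'a) \<Rightarrow> ('a \<Rightarrow> 'a) \<Rightarrow> ('a \<Rightarrow> 'a \<Rightarrow> 'a) \<Rightarrow> ('a \<Rightarrow> nat \<Rightarrow> nat)
    \<Rightarrow> (nat \<Rightarrow> enat) \<Rightarrow> ((nat \<Rightarrow> nat) \<Rightarrow> (nat \<Rightarrow> nat) \<Rightarrow> 'a) \<Rightarrow> (nat \<Rightarrow> nat) \<Rightarrow> (nat \<Rightarrow> nat) \<Rightarrow> bool"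
  where
  "in_P k L r s cmp d dx x m n \<longleftrightarrow>
     boundary_path k L r s cmp d dx x \<and> m \<in> NN k \<and> n \<in> NN k \<and> m \<le> n \<and> \<not> le_en n dx"

definition P_equiv ::
  "nat \<Rightarrow> 'a set \<Rightarrow> ('a \<Rightarrow> 'a) \<Rightarrow> ('a \<Rightarrow> 'a) \<Rightarrow> ('a \<Rightarrow> 'a \<Rightarrow> 'a) \<Rightarrow> ('a \<Rightarrow> nat \<Rightarrow> nat)
    \<Rightarrow> (nat \<Rightarrow> enat) \<Rightarrow> ((nat \<Rightarrow> nat) \<Rightarrow> (nat \<Rightarrow> nat) \<Rightarrow> 'a) \<Rightarrow> (nat \<Rightarrow> nat) \<Rightarrow> (nat \<Rightarrow> nat)
    \<Rightarrow> (nat \<Rightarrow> enat) \<Rightarrow> ((nat \<Rightarrow> nat) \<Rightarrow> (nat \<Rightarrow> nat) \<Rightarrow> 'a) \<Rightarrow> (nat \<Rightarrow> nat) \<Rightarrow> (nat \<Rightarrow> nat) \<Rightarrow> bool"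
  where
  "P_equiv k L r s cmp d dx x m n dy y p q \<longleftrightarrow>
     in_P k L r s cmp d dx x m n \<and> in_P k L r s cmp d dy y p q \<and>
     x (meet_en m dx) (meet_en n dx) = y (meet_en p dy) (meet_en q dy) \<and>
     m - meet_en m dx = p - meet_en p dy \<and>
     n - m = q - p"

end

theory Submission
  imports Defs
begin

lemma kg_facts:
  assumes "kgraph k L r s cmp d"
  shows "\<And>f g. f \<in> L \<Longrightarrow> g \<in> L \<Longrightarrow> s f = r g \<Longrightarrow> cmp f g \<in> L \<and> r (cmp f g) = r f \<and> s (cmp f g) = s g"
    and "\<And>f. f \<in> L \<Longrightarrow> d f \<in> NN k"
    and "\<And>f a b. f \<in> L \<Longrightarrow> a \<in> NN k \<Longrightarrow> b \<in> NN k \<Longrightarrow> d f = a + b \<Longrightarrow>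
         (\<exists>!(g, h). g \<in> L \<and> h \<in> L \<and> s g = r h \<and> f = cmp g h \<and> d g = a \<and> d h = b)"
proof -
  have A: "\<forall>f\<in>L. \<forall>g\<in>L. s f = r g \<longrightarrow> cmp f g \<in> L \<and> r (cmp f g) = r f \<and> s (cmp f g) = s g"
    using assms unfolding kgraph_def by (elim conjE)
  have B: "\<forall>f\<in>L. d f \<in> NN k"
    using assms unfolding kgraph_def by (elim conjE)
  have C: "\<forall>f\<in>L. \<forall>m\<in>NN k. \<forall>n\<in>NN k. d f = m + n \<longrightarrow>
         (\<exists>!(g, h). g \<in> L \<and> h \<in> L \<and> s g = r h \<and> f = cmp g h \<and> d g = m \<and> d h = n)"
    using assms unfolding kgraph_def by (elim conjE)
  show "\<And>f g. f \<in> L \<Longrightarrow> g \<in> L \<Longrightarrow> s f = r g \<Longrightarrow> cmp f g \<in> L \<and> r (cmp f g) = r f \<and> s (cmp f g) = s g"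
    using A by blast
  show "\<And>f. f \<in> L \<Longrightarrow> d f \<in> NN k" using B by blast
  show "\<And>f a b. f \<in> L \<Longrightarrow> a \<in> NN k \<Longrightarrow> b \<in> NN k \<Longrightarrow> d f = a + b \<Longrightarrow>
         (\<exists>!(g, h). g \<in> L \<and> h \<in> L \<and> s g = r h \<and> f = cmp g h \<and> d g = a \<and> d h = b)"
    using C by (simp only: Ball_def)
qed

lemma uniq_fact:
  assumes "kgraph k L r s cmp d" "f \<in> L" "a \<in> NN k" "b \<in> NN k" "d f = a + b"
    and "g \<in> L" "h \<in> L" "s g = r h" "f = cmp g h" "d g = a" "d h = b"
    and "g' \<in> L" "h' \<in> L" "s g' = r h'" "f = cmp g' h'" "d g' = a" "d h' = b"
  shows "h = h'"
proof -
  define P where "P = (\<lambda>gh. case gh of (g, h) \<Rightarrow> g \<in> L \<and> h \<in> L \<and> s g = r h \<and> f = cmp g h \<and> d g = a \<and> d h = b)"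
  from kg_facts(3)[OF assms(1-5)] have E: "\<exists>!gh. P gh" unfolding P_def .
  have P1: "P (g,h)" and P2: "P (g',h')" unfolding P_def using assms by simp_all
  from E obtain c where "\<forall>y. P y \<longrightarrow> y = c" by (elim ex1E) blast
  then have "(g,h) = (g',h')" using P1 P2 by metis
  then show ?thesis by simp
qed

lemma NN_add: "a \<in> NN k \<Longrightarrow> b \<in> NN k \<Longrightarrow> a + b \<in> NN k" by (simp add: NN_def)
lemma NN_diff: "a \<in> NN k \<Longrightarrow> a - b \<in> NN k" by (simp add: NN_def)

theorem proposition3p16:
  fixes k :: nat and L :: "'a set" and r s :: "'a \<Rightarrow> 'a" and cmp :: "'a \<Rightarrow> 'a \<Rightarrow> 'a"
    and d :: "'a \<Rightarrow> nat \<Rightarrow> nat" and lam :: 'a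
    and dx :: "nat \<Rightarrow> enat" and x z :: "(nat \<Rightarrow> nat) \<Rightarrow> (nat \<Rightarrow> nat) \<Rightarrow> 'a"
    and m n :: "nat \<Rightarrow> nat"
  assumes "kgraph k L r s cmp d"
    and "lam \<in> L"
    and "in_P k L r s cmp d dx x m n"
    and "le_en m dx"
    and "s lam = x m m"
    and "is_concat k L r s cmp d lam (deg_shift m dx) (shift m x) z"
  shows "boundary_path k L r s cmp d (deg_concat (d lam) (deg_shift m dx)) z
       \<and> P_equiv k L r s cmp d (deg_concat (d lam) (deg_shift m dx)) z (d lam) (n - m + d lam)
                                dx x m n"
proof -
  define dl where "dl = d lam"
  define dz where "dz = deg_concat dl (deg_shift m dx)"
  have dzi: "\<And>i. dz i = enat (dl i) + (dx i - enat (m i))"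
    by (simp add: dz_def deg_concat_def deg_shift_def)
  have K: "kgraph k L r s cmp d" by fact
  from assms(3) have bx: "boundary_path k L r s cmp d dx x" and mN: "m \<in> NN k"
    and nN: "n \<in> NN k" and mn: "m \<le> n" and nle: "\<not> le_en n dx"
    by (auto simp: in_P_def)
  from bx have gx: "graph_morph k L r s cmp d dx x" by (simp add: boundary_path_def)
  from assms(6) have gz: "graph_morph k L r s cmp d dz z" and z0: "z 0 dl = lam"
    and zp: "\<And>p. p \<in> NN k \<Longrightarrow> dl \<le> p \<Longrightarrow> le_en p dz \<Longrightarrow> z 0 p = cmp lam (x m (p - dl + m))"
    by (auto simp: is_concat_def dz_def dl_def shift_def)
  have dlN: "dl \<in> NN k" using kg_facts(2)[OF K assms(2)] dl_def by simp
  have zN: "(0::nat\<Rightarrow>nat) \<in> NN k" by (simp add: NN_def)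
  have mdx: "\<And>i. enat (m i) \<le> dx i" using assms(4) by (simp add: le_en_def)
  have gxL: "\<And>p q. p \<in> NN k \<Longrightarrow> q \<in> NN k \<Longrightarrow> p \<le> q \<Longrightarrow> le_en q dx \<Longrightarrow>
      x p q \<in> L \<and> d (x p q) = q - p \<and> r (x p q) = x p p \<and> s (x p q) = x q q"
    using gx unfolding graph_morph_def by blast
  have gzL: "\<And>p q. p \<in> NN k \<Longrightarrow> q \<in> NN k \<Longrightarrow> p \<le> q \<Longrightarrow> le_en q dz \<Longrightarrow>
      z p q \<in> L \<and> d (z p q) = q - p \<and> r (z p q) = z p p \<and> s (z p q) = z q q"
    using gz unfolding graph_morph_def by blast
  have gzC: "\<And>p q t. p \<in> NN k \<Longrightarrow> q \<in> NN k \<Longrightarrow> t \<in> NN k \<Longrightarrow> p \<le> q \<Longrightarrow> q \<le> t \<Longrightarrow> le_en t dz \<Longrightarrow>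
      cmp (z p q) (z q t) = z p t"
    using gz unfolding graph_morph_def by blast
  have key: "p - dl + m \<in> NN k \<and> m \<le> p - dl + m \<and> le_en (p - dl + m) dx \<and>
      z 0 p = cmp lam (x m (p - dl + m)) \<and> z p p = x (p - dl + m) (p - dl + m)"
    if p: "p \<in> NN k" "dl \<le> p" "le_en p dz" for p
  proof -
    define q where "q = p - dl + m"
    have qN: "q \<in> NN k" unfolding q_def by (intro NN_add NN_diff p mN)
    have mq: "m \<le> q" unfolding q_def by (simp add: le_fun_def)
    have qdx: "le_en q dx" unfolding le_en_def
    proof
      fix i
      have a: "enat (p i) \<le> enat (dl i) + (dx i - enat (m i))" using p(3) dzi by (simp add: le_en_def)
      have b: "dl i \<le> p i" using p(2) by (simp add: le_fun_def)
      show "enat (q i) \<le> dx i" using a b mdx[of i] unfolding q_def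
        by (cases "dx i") auto
    qed
    have zq: "z 0 p = cmp lam (x m q)" using zp[OF p] q_def by simp
    have xq: "x m q \<in> L \<and> r (x m q) = x m m \<and> s (x m q) = x q q"
      using gxL[OF mN qN mq qdx] by simp
    have "z p p = s (z 0 p)" using gzL[OF zN p(1) _ p(3)] by (simp add: le_fun_def)
    also have "\<dots> = x q q" using zq kg_facts(1)[OF K assms(2), of "x m q"] xq assms(5) by simp
    finally show ?thesis using qN mq qdx zq q_def by simp
  qed
  obtain nx where nxN: "nx \<in> NN k" and nxle: "le_en nx dx" and
    nxp: "\<And>p i e. p \<in> NN k \<Longrightarrow> nx \<le> p \<Longrightarrow> le_en p dx \<Longrightarrow> i < k \<Longrightarrow> enat (p i) = dx i \<Longrightarrow>
       e \<in> L \<Longrightarrow> r e = x p p \<Longrightarrow> d e = unitv i \<Longrightarrow> False"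
    using bx unfolding boundary_path_def by blast
  have bz: "boundary_path k L r s cmp d dz z"
    unfolding boundary_path_def
  proof (intro conjI gz bexI[of _ "dl + (nx - m)"] ballI impI allI notI)
    show "dl + (nx - m) \<in> NN k" by (intro NN_add NN_diff dlN nxN)
    show "le_en (dl + (nx - m)) dz" unfolding le_en_def
    proof
      fix i
      show "enat ((dl + (nx - m)) i) \<le> dz i"
      proof (cases "dx i")
        case (enat b)
        have "enat (nx i) \<le> dx i" using nxle by (simp add: le_en_def)
        with enat have "nx i \<le> b" by simp
        then show ?thesis using enat by (simp add: dzi)
      qed (simp add: dzi)
    qed
  next
    fix p i
    assume pN: "p \<in> NN k" and pp: "dl + (nx - m) \<le> p \<and> le_en p dz" and ik: "i < k"
      and pi: "enat (p i) = dz i" and ex: "\<exists>e\<in>L. r e = z p p \<and> d e = unitv i"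
    have pp1: "\<forall>i. dl i + (nx i - m i) \<le> p i" using pp by (simp add: le_fun_def)
    then have dlp: "dl \<le> p" unfolding le_fun_def using add_leD1 by blast
    note kk = key[OF pN dlp conjunct2[OF pp]]
    define q where "q = p - dl + m"
    have nq: "nx \<le> q" unfolding q_def le_fun_def
    proof
      fix i
      have "dl i + (nx i - m i) \<le> p i" using pp by (simp add: le_fun_def)
      then show "nx i \<le> (p - dl + m) i" by simp
    qed
    have qi: "enat (q i) = dx i" using pi mdx[of i] dlp unfolding dzi q_def
      by (cases "dx i") (auto simp: le_fun_def)
    from ex obtain e where "e \<in> L" "r e = z p p" "d e = unitv i" by blast
    then show False using nxp[of q i e] kk q_def nq qi ik by simp
  qed
  have n2N: "n - m + dl \<in> NN k" by (intro NN_add NN_diff nN dlN)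
  have dln2: "dl \<le> n - m + dl" by (simp add: le_fun_def)
  have nle2: "\<not> le_en (n - m + dl) dz"
  proof
    assume a: "le_en (n - m + dl) dz"
    from nle obtain i where ni: "\<not> enat (n i) \<le> dx i" by (auto simp: le_en_def)
    then obtain b where b: "dx i = enat b" by (cases "dx i") auto
    have "m i \<le> n i" using mn by (simp add: le_fun_def)
    moreover have "m i \<le> b" using mdx[of i] b by simp
    moreover have "enat (n i - m i + dl i) \<le> dz i" using a by (simp add: le_en_def)
    ultimately show False using ni b by (simp add: dzi)
  qed
  have inPz: "in_P k L r s cmp d dz z dl (n - m + dl)"
    unfolding in_P_def using bz dlN n2N dln2 nle2 by simp
  have meet_dl: "meet_en dl dz = dl"
  proof
    fix i show "meet_en dl dz i = dl i" by (cases "dx i") (auto simp: meet_en_def dzi)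
  qed
  have meet_m: "meet_en m dx = m"
  proof
    fix i show "meet_en m dx i = m i" using mdx[of i] by (cases "dx i") (auto simp: meet_en_def)
  qed
  define n' where "n' = meet_en n dx"
  have n'N: "n' \<in> NN k" using nN by (auto simp: NN_def n'_def meet_en_def split: enat.split)
  have mn': "m \<le> n'" unfolding le_fun_def
  proof
    fix i show "m i \<le> n' i" using mdx[of i] mn by (cases "dx i") (auto simp: meet_en_def n'_def le_fun_def)
  qed
  have n'dx: "le_en n' dx" unfolding le_en_def
  proof
    fix i show "enat (n' i) \<le> dx i" by (cases "dx i") (auto simp: meet_en_def n'_def)
  qed
  define q where "q = n' - m + dl"
  have w: "meet_en (n - m + dl) dz = q"
  proof
    fix i show "meet_en (n - m + dl) dz i = q i" using mdx[of i] mn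
      by (cases "dx i") (auto simp: meet_en_def n'_def q_def dzi le_fun_def)
  qed
  have qN: "q \<in> NN k" unfolding q_def by (intro NN_add NN_diff n'N dlN)
  have dlq: "dl \<le> q" by (simp add: q_def le_fun_def)
  have qdz: "le_en q dz" unfolding le_en_def
  proof
    fix i show "enat (q i) \<le> dz i" using mdx[of i] mn
      by (cases "dx i") (auto simp: meet_en_def n'_def q_def dzi le_fun_def)
  qed
  have qback: "q - dl + m = n'"
  proof
    fix i show "(q - dl + m) i = n' i" using mn' by (simp add: q_def le_fun_def)
  qed
  have zq: "z 0 q = cmp lam (x m n')" using key[OF qN dlq qdz] qback by simp
  have zdl: "z dl q \<in> L \<and> d (z dl q) = q - dl \<and> r (z dl q) = s lam"
  proof -
    have dldz: "le_en dl dz" unfolding le_en_def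
    proof
      fix i
      have "enat (dl i) \<le> enat (q i)" using dlq by (simp add: le_fun_def)
      also have "\<dots> \<le> dz i" using qdz by (simp add: le_en_def)
      finally show "enat (dl i) \<le> dz i" .
    qed
    have "z dl dl = s (z 0 dl)" using gzL[OF zN dlN _ dldz] by (simp add: le_fun_def)
    then have "z dl dl = s lam" using z0 by simp
    then show ?thesis using gzL[OF dlN qN dlq qdz] by simp
  qed
  have xmn: "x m n' \<in> L \<and> d (x m n') = q - dl \<and> r (x m n') = s lam"
  proof -
    have "n' - m = q - dl" by (rule ext) (simp add: q_def)
    then show ?thesis using gxL[OF mN n'N mn' n'dx] assms(5) by simp
  qed
  have zq0: "z 0 q \<in> L \<and> d (z 0 q) = dl + (q - dl)"
  proof -
    have "dl + (q - dl) = q" using dlq by (simp add: le_fun_def fun_eq_iff)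
    then show ?thesis using gzL[OF zN qN _ qdz] by (simp add: le_fun_def)
  qed
  have zsplit: "z 0 q = cmp lam (z dl q)" using gzC[OF zN dlN qN _ dlq qdz] z0 by (simp add: le_fun_def)
  have eqv: "z dl q = x m n'"
    by (rule uniq_fact[OF K conjunct1[OF zq0] dlN NN_diff[OF qN] conjunct2[OF zq0]
          assms(2) conjunct1[OF zdl] _ zsplit dl_def[symmetric] conjunct1[OF conjunct2[OF zdl]]
          assms(2) conjunct1[OF xmn] _ zq dl_def[symmetric] conjunct1[OF conjunct2[OF xmn]]])
      (use zdl xmn in simp_all)
  have "P_equiv k L r s cmp d dz z dl (n - m + dl) dx x m n"
    unfolding P_equiv_def
    using inPz assms(3) eqv meet_dl meet_m w n'_def by (simp add: fun_eq_iff[of "_ - _" "_ - _"])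
  then show ?thesis using bz dz_def dl_def by simp
qed

end
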